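(* Let $N\ge1$, $\tilde s\in(0,1)$ and $$\tilde m\in\Big(\frac{N-2+4\tilde s}{N+2\tilde s},\ \frac{N+2\tilde s}{N+2}\Big).$$ Then there is a constant $K=K(N,\tilde s,\tilde m)>0$ such that $$v(x,t)=K\,t^{\frac{1}{1-\tilde m}}\,|x|^{-\frac{2-2\tilde s}{1-\tilde m}},\qquad x\neq 0,\ t>0,$$ is a solution of $$v_t=\nabla\cdot\big(v^{\tilde m-1}\nabla(-\Delta)^{-\tilde s}v\big).$$
   Context: For $0<\sigma<1$, $(-\Delta)^{-\sigma}$ is the inverse fractional Laplacian on $\mathbb{R}^N$ (Fourier symbol $(2\pi|\xi|)^{-2\sigma}$, Riesz potential). On power functions it acts by $$(-\Delta)^{-\sigma}|x|^{-\alpha}=\bar k(\alpha)\,|x|^{-\alpha+2\sigma},$$ where $$\bar k(\alpha)=2^{-2\sigma}\frac{\Gamma\big(\frac{N-\alpha}{2}\big)\,\Gamma\big(\frac{\alpha-2\sigma}{2}\big)}{\Gamma\big(\frac{\alpha}{2}\big)\,\Gamma\big(\frac{N-\alpha+2\sigma}{2}\big)}.$$ This formula is used as the meaning of $(-\Delta)^{-\sigma}|x|^{-\alpha}$ whenever the Gamma factors are finite, including exponents $\alpha>N$. The equation is required to hold pointwise for $x\neq0$, $t>0$. *)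

theory Defs
  imports "HOL-Analysis.Analysis"
begin

text \<open>The multiplier kbar(alpha) of the inverse fractional Laplacian on power functions
  in dimension N with order sigma.\<close>
definition kbar :: "nat \<Rightarrow> real \<Rightarrow> real \<Rightarrow> real" where
  "kbar N \<sigma> \<alpha> =
     2 powr (-2*\<sigma>) * (Gamma ((real N - \<alpha>)/2) * Gamma ((\<alpha> - 2*\<sigma>)/2))
       / (Gamma (\<alpha>/2) * Gamma ((real N - \<alpha> + 2*\<sigma>)/2))"

definition kbar_defined :: "nat \<Rightarrow> real \<Rightarrow> real \<Rightarrow> bool" where
  "kbar_defined N \<sigma> \<alpha> \<longleftrightarrow>
     (real N - \<alpha>)/2 \<notin> \<int>\<^sub>\<le>\<^sub>0 \<and> (\<alpha> - 2*\<sigma>)/2 \<notin> \<int>\<^sub>\<le>\<^sub>0 \<and>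
     \<alpha>/2 \<notin> \<int>\<^sub>\<le>\<^sub>0 \<and> (real N - \<alpha> + 2*\<sigma>)/2 \<notin> \<int>\<^sub>\<le>\<^sub>0"

text \<open>inv_frac_lap sigma u w: u is a power function c |x|^(-alpha) on x /= 0 and
  w = (-Delta)^(-sigma) u, given by the formula c kbar(alpha) |x|^(-alpha+2 sigma) (on x /= 0),
  the dimension being N = CARD('n).\<close>
definition inv_frac_lap :: "real \<Rightarrow> (real^'n \<Rightarrow> real) \<Rightarrow> (real^'n \<Rightarrow> real) \<Rightarrow> bool" where
  "inv_frac_lap \<sigma> u w \<longleftrightarrow>
     (\<exists>c \<alpha>. kbar_defined CARD('n) \<sigma> \<alpha> \<and>
        (\<forall>x. x \<noteq> 0 \<longrightarrow> u x = c * norm x powr (-\<alpha>)) \<and>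
        (\<forall>x. x \<noteq> 0 \<longrightarrow> w x = c * kbar CARD('n) \<sigma> \<alpha> * norm x powr (-\<alpha> + 2*\<sigma>)))"

definition has_partial :: "(real^'n \<Rightarrow> real) \<Rightarrow> 'n \<Rightarrow> real^'n \<Rightarrow> real \<Rightarrow> bool" where
  "has_partial f i x d \<longleftrightarrow> ((\<lambda>h. f (x + h *\<^sub>R axis i 1)) has_real_derivative d) (at 0)"

end

theory Submission
  imports Defs
begin

lemma partial_norm_powr:
  fixes x :: "real^'n" assumes "x \<noteq> 0"
  shows "has_partial (\<lambda>y. norm y powr p) i x (p * norm x powr (p-2) * x$i)"
proof -
  have d1: "((\<lambda>h::real. x + h *\<^sub>R axis i 1) has_derivative (\<lambda>h. h *\<^sub>R axis i 1)) (at 0)"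
    by (auto intro!: derivative_eq_intros)
  have d2: "(norm has_derivative (\<lambda>v. v \<bullet> sgn x)) (at (x + 0 *\<^sub>R axis i (1::real)))"
    using has_derivative_norm[OF assms] by simp
  have "((\<lambda>h. norm (x + h *\<^sub>R axis i 1)) has_derivative (\<lambda>h. (h *\<^sub>R axis i 1) \<bullet> sgn x)) (at 0)"
    using diff_chain_at[OF d1 d2] by (simp add: o_def)
  moreover have "(\<lambda>h. (h *\<^sub>R axis i 1) \<bullet> sgn x) = (*) (x$i / norm x)"
    by (auto simp: sgn_div_norm inner_axis' inner_commute inner_axis field_simps)
  ultimately have g: "((\<lambda>h. norm (x + h *\<^sub>R axis i 1)) has_real_derivative (x$i / norm x)) (at 0)"
    by (simp add: has_field_derivative_def)
  have "((\<lambda>h. norm (x + h *\<^sub>R axis i 1) powr p) has_real_derivative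
       p * (norm (x + 0 *\<^sub>R axis i 1)) powr (p - of_nat 1) * (x$i / norm x)) (at 0)"
    by (rule DERIV_fun_powr[OF g]) (use assms in simp)
  moreover have "p * (norm (x + 0 *\<^sub>R axis i 1)) powr (p - of_nat 1) * (x$i / norm x)
      = p * norm x powr (p-2) * x$i"
    using assms by (simp add: powr_diff field_simps powr_numeral power2_eq_square)
  ultimately show ?thesis unfolding has_partial_def by simp
qed

lemma partial_comp:
  fixes x :: "real^'n"
  shows "has_partial (\<lambda>y. y$i) i x 1"
  unfolding has_partial_def
  by (auto intro!: derivative_eq_intros simp: axis_def)


lemma partial_cmult:
  assumes "has_partial f i x d" shows "has_partial (\<lambda>y. c * f y) i x (c * d)"
  using assms DERIV_cmult unfolding has_partial_def by blast

lemma partial_mult: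
  assumes "has_partial f i x df" "has_partial g i x dg"
  shows "has_partial (\<lambda>y. f y * g y) i x (df * g x + f x * dg)"
  using DERIV_mult[OF assms[unfolded has_partial_def]] unfolding has_partial_def by (simp add: ac_simps)

lemma notint: "-1 < (z::real) \<Longrightarrow> z < 0 \<Longrightarrow> z \<notin> \<int>\<^sub>\<le>\<^sub>0"
proof
  assume "-1 < z" "z < 0" "z \<in> \<int>\<^sub>\<le>\<^sub>0"
  then obtain n where "z = of_int n" "n \<le> 0" by (auto elim!: nonpos_Ints_cases)
  with \<open>-1 < z\<close> \<open>z < 0\<close> show False by simp
qed

lemma gamma_neg: "-1 < (z::real) \<Longrightarrow> z < 0 \<Longrightarrow> Gamma z < 0"
proof -
  assume h: "-1 < z" "z < 0"
  have "Gamma (z+1) = z * Gamma z" using Gamma_plus1 notint[OF h] by blast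
  moreover have "Gamma (z+1) > 0" using h by simp
  ultimately show ?thesis using h by (smt (verit) mult_nonpos_nonneg)
qed

lemma posnotint: "(z::real) > 0 \<Longrightarrow> z \<notin> \<int>\<^sub>\<le>\<^sub>0"
  by auto



theorem theorem6p1:
  fixes s m :: real
  assumes "0 < s" "s < 1"
    and "(real (CARD('n)) - 2 + 4* s) / (real (CARD('n)) + 2* s) < m"
    and "m < (real (CARD('n)) + 2* s) / (real (CARD('n)) + 2)"
  shows "\<exists>K>0. \<exists>P :: real^'n \<Rightarrow> real \<Rightarrow> real.
    (\<forall>t>0. inv_frac_lap s
        (\<lambda>y. K * t powr (1/(1-m)) * norm y powr (-(2-2* s)/(1-m))) (\<lambda>y. P y t)) \<and>
    (\<forall>x t. x \<noteq> 0 \<longrightarrow> t > 0 \<longrightarrow>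
      (\<exists>dv G divs.
        ((\<lambda>\<tau>. K * \<tau> powr (1/(1-m)) * norm x powr (-(2-2* s)/(1-m))) has_real_derivative dv) (at t) \<and>
        (\<forall>y i. y \<noteq> 0 \<longrightarrow> has_partial (\<lambda>z. P z t) i y (G y i)) \<and>
        (\<forall>i. has_partial
               (\<lambda>y. (K * t powr (1/(1-m)) * norm y powr (-(2-2* s)/(1-m))) powr (m-1) * G y i)
               i x (divs i)) \<and>
        dv = (\<Sum>i\<in>UNIV. divs i)))"
  proof -
  define N where "N = real CARD('n)"
  define a where "a = (2-2* s)/(1-m)"
  have Npos: "N \<ge> 1" unfolding N_def by (simp add: Suc_le_eq)
  have h3: "N - 2 + 4* s < m * (N + 2* s)" using assms(3) assms(1) Npos
    unfolding N_def by (simp add: divide_less_eq)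
  have h4: "m * (N+2) < N + 2* s" using assms(4) assms(1) Npos
    unfolding N_def by (simp add: less_divide_eq)
  have m1: "m < 1" using h4 assms(2) Npos by (smt (verit) mult_le_cancel_right1)
  have ha1: "a > N + 2* s" unfolding a_def using m1 h3 by (simp add: less_divide_eq algebra_simps)
  have ha2: "a < N + 2" unfolding a_def using m1 h4 by (simp add: divide_less_eq algebra_simps)
  define k where "k = kbar CARD('n) s a"
  have kdef: "kbar_defined CARD('n) s a"
    unfolding kbar_defined_def N_def[symmetric]
    using ha1 ha2 assms(1,2) Npos
    by (intro conjI notint posnotint) auto
  have g1: "Gamma ((N-a)/2) < 0" using ha1 ha2 assms(1,2) by (intro gamma_neg) auto
  have g4: "Gamma ((N-a+2* s)/2) < 0" using ha1 ha2 assms(1,2) by (intro gamma_neg) auto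
  have g2: "Gamma ((a-2* s)/2) > 0" using ha1 Npos by simp
  have g3: "Gamma (a/2) > 0" using ha1 Npos assms(1) by simp
  have kpos: "k > 0"
  proof -
    have n: "Gamma ((N-a)/2) * Gamma ((a-2* s)/2) < 0" using g1 g2 by (simp add: mult_neg_pos)
    have d: "Gamma (a/2) * Gamma ((N-a+2* s)/2) < 0" using g3 g4 by (simp add: mult_pos_neg)
    have "0 < Gamma ((N-a)/2) * Gamma ((a-2* s)/2) / (Gamma (a/2) * Gamma ((N-a+2* s)/2))"
      using n d by (simp add: divide_neg_neg)
    then have "0 < 2 powr (-2* s) * (Gamma ((N-a)/2) * Gamma ((a-2* s)/2) / (Gamma (a/2) * Gamma ((N-a+2* s)/2)))"
      by (intro mult_pos_pos) simp_all
    then show ?thesis unfolding k_def kbar_def N_def[symmetric]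
      by (metis times_divide_eq_right)
  qed
  define C where "C = k*(2* s-a)*(N-a)"
  have "(2* s-a)*(N-a) > 0" using ha1 assms(1) Npos by (intro mult_neg_neg) auto
  then have Cpos: "C > 0" unfolding C_def using kpos by (simp add: mult.assoc)
  define K where "K = ((1-m)*C) powr (1/(1-m))"
  have Kpos: "K > 0" unfolding K_def using Cpos m1 by simp
  have Kpow: "K powr (1-m) = (1-m)*C" unfolding K_def using Cpos m1 by (simp add: powr_powr)
  have Kkey: "K/(1-m) = K powr m * C"
  proof -
    have "K = K powr m * K powr (1-m)" using Kpos by (simp add: powr_add[symmetric])
    then show ?thesis using Kpow m1 by (simp add: field_simps)
  qed
  have e: "-(2-2* s)/(1-m) = -a" unfolding a_def by (simp add: minus_divide_left)
  define P :: "real^'n \<Rightarrow> real \<Rightarrow> real" where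
    "P = (\<lambda>y t. K * t powr (1/(1-m)) * k * norm y powr (-a+2* s))"
  show ?thesis
  proof (rule exI[of _ K], intro conjI Kpos exI[of _ P] allI impI)
    fix t :: real assume "t > 0"
    show "inv_frac_lap s (\<lambda>y. K * t powr (1/(1-m)) * norm y powr (-(2-2* s)/(1-m))) (\<lambda>y. P y t)"
      unfolding inv_frac_lap_def e
      by (intro exI[of _ "K * t powr (1/(1-m))"] exI[of _ a]) (simp add: kdef P_def k_def)
  next
    fix x :: "real^'n" and t :: real
    assume x0: "x \<noteq> 0" and t0: "t > 0"
    define T where "T = t powr (1/(1-m))"
    define n where "n = norm x"
    have npos: "n > 0" using x0 unfolding n_def by simp
    define B where "B = (K*T) powr (m-1) * (K*T*k*(-a+2* s))"
    define dv where "dv = K * (1/(1-m) * t powr (1/(1-m) - 1)) * n powr (-a)"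
    define G where "G = (\<lambda>(y::real^'n) (i::'n). K*T*k * ((-a+2* s) * norm y powr (-a+2* s-2) * y$i))"
    define divs where "divs = (\<lambda>i. B * ((-a) * norm x powr (-a-2) * x$i * x$i + norm x powr (-a) * 1))"
    show "\<exists>dv G divs.
        ((\<lambda>\<tau>. K * \<tau> powr (1/(1-m)) * norm x powr (-(2-2* s)/(1-m))) has_real_derivative dv) (at t) \<and>
        (\<forall>y i. y \<noteq> 0 \<longrightarrow> has_partial (\<lambda>z. P z t) i y (G y i)) \<and>
        (\<forall>i. has_partial
               (\<lambda>y. (K * t powr (1/(1-m)) * norm y powr (-(2-2* s)/(1-m))) powr (m-1) * G y i)
               i x (divs i)) \<and>
        dv = (\<Sum>i\<in>UNIV. divs i)"
    proof (intro exI[of _ dv] exI[of _ G] exI[of _ divs] conjI allI impI)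
      show "((\<lambda>\<tau>. K * \<tau> powr (1/(1-m)) * norm x powr (-(2-2* s)/(1-m))) has_real_derivative dv) (at t)"
        unfolding e dv_def n_def
        by (intro DERIV_cmult_right DERIV_cmult has_real_derivative_powr t0)
    next
      fix y :: "real^'n" and i assume "y \<noteq> 0"
      show "has_partial (\<lambda>z. P z t) i y (G y i)"
        unfolding P_def G_def T_def
        using partial_cmult[OF partial_norm_powr[OF \<open>y \<noteq> 0\<close>, of "-a+2* s" i], of "K * t powr (1/(1-m)) * k"]
        by simp
    next
      fix i
      have feq: "(\<lambda>y. (K * t powr (1/(1-m)) * norm y powr (-(2-2* s)/(1-m))) powr (m-1) * G y i)
          = (\<lambda>y. B * (norm y powr (-a) * y$i))"
      proof
        fix y :: "real^'n"
        show "(K * t powr (1/(1-m)) * norm y powr (-(2-2* s)/(1-m))) powr (m-1) * G y i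
          = B * (norm y powr (-a) * y$i)"
        proof (cases "y = 0")
          case True then show ?thesis by (simp add: G_def)
        next
          case False
          define r where "r = norm y"
          have r0: "r > 0" using False r_def by simp
          have KT: "K*T > 0" using Kpos t0 T_def by simp
          have eq1: "(K * T * r powr (-a)) powr (m-1) = (K*T) powr (m-1) * r powr (-a*(m-1))"
            using KT r0 by (simp add: powr_mult powr_powr)
          have eq2: "r powr (-a*(m-1)) * r powr (-a+2* s-2) = r powr (-a)"
          proof -
            have "-a*(m-1) + (-a+2* s-2) = -a" 
            proof -
              have "a*(1-m) = 2-2* s" unfolding a_def using m1 by simp
              then show ?thesis by (simp add: algebra_simps)
            qed
            then show ?thesis by (metis powr_add)
          qed
          have "(K * t powr (1/(1-m)) * norm y powr (-(2-2* s)/(1-m))) powr (m-1) * G y i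
              = ((K*T) powr (m-1) * r powr (-a*(m-1))) * (K*T*k*((-a+2* s)*r powr(-a+2* s-2)*y$i))"
            unfolding e T_def[symmetric] r_def[symmetric] G_def eq1 by simp
          also have "\<dots> = B * ((r powr (-a*(m-1)) * r powr (-a+2* s-2)) * y$i)"
            unfolding B_def by (simp add: mult_ac)
          also have "\<dots> = B * (norm y powr (-a) * y$i)" using eq2 r_def by simp
          finally show ?thesis .
        qed
      qed
      show "has_partial
               (\<lambda>y. (K * t powr (1/(1-m)) * norm y powr (-(2-2* s)/(1-m))) powr (m-1) * G y i)
               i x (divs i)"
        unfolding feq divs_def
        by (intro partial_cmult partial_mult partial_norm_powr x0 partial_comp)
    next
      have pw: "n powr (-a-2) * n^2 = n powr (-a)"
        using npos by (simp add: powr_diff powr_numeral power2_eq_square field_simps)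
      have s1: "(\<Sum>i\<in>UNIV. x$i * x$i) = n^2"
        unfolding n_def by (simp add: power2_norm_eq_inner inner_vec_def)
      have "(\<Sum>i\<in>UNIV. divs i) = (\<Sum>i\<in>UNIV. B * n powr (-a) + (B * (-a) * n powr (-a-2)) * (x$i * x$i))"
        unfolding divs_def n_def by (intro sum.cong) (auto simp: algebra_simps)
      also have "\<dots> = N * (B * n powr (-a)) + (B * (-a) * n powr (-a-2)) * n^2"
      proof -
        have "(\<Sum>i\<in>UNIV. B * n powr (-a) + (B * (-a) * n powr (-a-2)) * (x$i * x$i))
           = (\<Sum>i\<in>(UNIV::'n set). B * n powr (-a)) + (B * (-a) * n powr (-a-2)) * (\<Sum>i\<in>UNIV. x$i * x$i)"
          by (simp only: sum.distrib sum_distrib_left mult.assoc)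
        then show ?thesis by (simp add: s1 N_def)
      qed
      also have "\<dots> = B * (N-a) * n powr (-a)"
        using pw by (simp add: algebra_simps)
      finally have sumeq: "(\<Sum>i\<in>UNIV. divs i) = B * (N-a) * n powr (-a)" .
      have KT: "K*T > 0" using Kpos t0 T_def by simp
      have Bv: "B = K powr m * T powr m * k * (2* s-a)"
      proof -
        have "(K*T) powr (m-1) * (K*T) = (K*T) powr m"
          using KT by (simp add: powr_diff field_simps)
        then show ?thesis unfolding B_def using Kpos t0 T_def
          by (simp add: powr_mult)
      qed
      have Tm: "T powr m = t powr (1/(1-m) - 1)"
        unfolding T_def using t0 m1 by (simp add: powr_powr field_simps)
      show "dv = (\<Sum>i\<in>UNIV. divs i)"
      proof -
        define W where "W = t powr (1/(1-m) - 1)"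
        have "dv = (K/(1-m)) * (W * n powr (-a))" unfolding dv_def W_def by simp
        also have "\<dots> = K powr m * C * (W * n powr (-a))" using Kkey by simp
        also have "\<dots> = B * (N-a) * n powr (-a)"
          unfolding Bv Tm W_def[symmetric] C_def by (simp add: mult_ac)
        finally show ?thesis using sumeq by simp
      qed
    qed
  qed
qed

end
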